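(* Let $n\ge 1$, $i\in\{1,\ldots,n-1\}$, and let $C$ be a set of transpositions in $S_n$ which is $s_i$-stable, i.e. $s_i\in C$ and $s_iCs_i=C$. Then the divided difference operator $\partial_i$ is defined on all of $H_C$, and $\partial_i(H_C)\subseteq H_C$.
   Context: Let $S_n$ be the symmetric group on $\{1,\ldots,n\}$ with $(vw)(j)=v(w(j))$, and $s_i=(i\leftrightarrow i+1)$. Let $H=\mathrm{Fun}(S_n,\mathbb{C}[t_1,\ldots,t_n])$ be the ring of functions from $S_n$ to the polynomial ring, with pointwise operations. The star action (right action) of $w\in S_n$ on $f\in H$ is $(f*w)(v)=f(vw^{-1})$, extended linearly to $\mathbb{C}[S_n]$ (so $f*(1-\tau)=f-f*\tau$). Let $t_i\in H$ denote the constant function $v\mapsto t_i$ and $x_i\in H$ the function $v\mapsto t_{v(i)}$. For a transposition $\tau=(i\leftrightarrow k)$, an element $f\in H$ satisfies condition $\tau$ if $f-f*\tau=(x_i-x_k)g$ for some $g\in H$; these elements form a subring $H_\tau$, and for a set $C$ of transpositions $H_C=\bigcap_{\tau\in C}H_\tau$ (with $H_\varnothing=H$). For $f\in H_{s_i}$, the divided difference $\partial_i(f)$ is the unique $g\in H$ with $f-f*s_i=(x_i-x_{i+1})g$ (unique since $x_i-x_{i+1}$ is nonzero at every permutation); $\partial_i$ is defined exactly on $H_{s_i}$. *)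

theory Defs
  imports Complex_Main "HOL-Library.Poly_Mapping" "HOL-Combinatorics.Transposition"
          "HOL-Combinatorics.Permutations"
begin

text \<open>Polynomials over the complex numbers in the variables t_1, t_2, ...:
  a monomial is a finitely supported exponent vector exponent vectors,
  a polynomial a finitely supported coefficient function on monomials.\<close>
type_synonym cpoly = "(nat \<Rightarrow>\<^sub>0 nat) \<Rightarrow>\<^sub>0 complex"

definition pvar :: "nat \<Rightarrow> cpoly" where
  "pvar i = Poly_Mapping.single (Poly_Mapping.single i 1) 1"

definition pvars :: "cpoly \<Rightarrow> nat set" where
  "pvars p = \<Union> (Poly_Mapping.keys ` Poly_Mapping.keys p)"

definition Sn :: "nat \<Rightarrow> (nat \<Rightarrow> nat) set" where
  "Sn n = {v. v permutes {1..n}}"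

text \<open>H = Fun(S_n, C[t_1..t_n]); functions are normalised to 0 outside S_n.\<close>
definition Hring :: "nat \<Rightarrow> ((nat \<Rightarrow> nat) \<Rightarrow> cpoly) set" where
  "Hring n = {f. (\<forall>v\<in>Sn n. pvars (f v) \<subseteq> {1..n}) \<and> (\<forall>v. v \<notin> Sn n \<longrightarrow> f v = 0)}"

definition star :: "((nat \<Rightarrow> nat) \<Rightarrow> cpoly) \<Rightarrow> (nat \<Rightarrow> nat) \<Rightarrow> ((nat \<Rightarrow> nat) \<Rightarrow> cpoly)" where
  "star f w = (\<lambda>v. f (v \<circ> inv w))"

definition xfun :: "nat \<Rightarrow> nat \<Rightarrow> (nat \<Rightarrow> nat) \<Rightarrow> cpoly" where
  "xfun n i = (\<lambda>v. if v \<in> Sn n then pvar (v i) else 0)"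

definition Htr :: "nat \<Rightarrow> nat \<Rightarrow> nat \<Rightarrow> ((nat \<Rightarrow> nat) \<Rightarrow> cpoly) set" where
  "Htr n i k = {f \<in> Hring n. \<exists>g\<in>Hring n.
      (\<lambda>v. f v - star f (transpose i k) v) = (\<lambda>v. (xfun n i v - xfun n k v) * g v)}"

definition transpositions :: "nat \<Rightarrow> (nat \<Rightarrow> nat) set" where
  "transpositions n = {transpose i k | i k. i \<in> {1..n} \<and> k \<in> {1..n} \<and> i \<noteq> k}"

definition HC :: "nat \<Rightarrow> (nat \<Rightarrow> nat) set \<Rightarrow> ((nat \<Rightarrow> nat) \<Rightarrow> cpoly) set" where
  "HC n C = {f \<in> Hring n. \<forall>\<tau>\<in>C. \<forall>i k. i \<noteq> k \<and> \<tau> = transpose i k \<longrightarrow> f \<in> Htr n i k}"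

definition s :: "nat \<Rightarrow> nat \<Rightarrow> nat" where
  "s i = transpose i (i + 1)"

definition divdiff :: "nat \<Rightarrow> nat \<Rightarrow> ((nat \<Rightarrow> nat) \<Rightarrow> cpoly) \<Rightarrow> ((nat \<Rightarrow> nat) \<Rightarrow> cpoly)" where
  "divdiff n i f = (\<lambda>v. if v \<in> Sn n then
      (THE q. f v - star f (s i) v = (xfun n i v - xfun n (i + 1) v) * q) else 0)"

end

theory Submission
  imports Defs
begin

definition Phi :: "((nat \<Rightarrow>\<^sub>0 nat) \<Rightarrow> (nat \<Rightarrow>\<^sub>0 nat)) \<Rightarrow> ((nat \<Rightarrow>\<^sub>0 nat) \<Rightarrow> complex) \<Rightarrow> cpoly \<Rightarrow> cpoly" where
  "Phi \<mu> \<chi> p = (\<Sum>m\<in>Poly_Mapping.keys p. Poly_Mapping.single (\<mu> m) (\<chi> m * Poly_Mapping.lookup p m))"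

lemma Phi_superset:
  assumes "finite S" "Poly_Mapping.keys p \<subseteq> S"
  shows "Phi \<mu> \<chi> p = (\<Sum>m\<in>S. Poly_Mapping.single (\<mu> m) (\<chi> m * Poly_Mapping.lookup p m))"
  unfolding Phi_def
  by (rule sum.mono_neutral_left[OF assms]) (auto simp: in_keys_iff)

lemma Phi_add: "Phi \<mu> \<chi> (p + q) = Phi \<mu> \<chi> p + Phi \<mu> \<chi> q"
proof -
  let ?S = "Poly_Mapping.keys p \<union> Poly_Mapping.keys q"
  have "Phi \<mu> \<chi> (p + q) = (\<Sum>m\<in>?S. Poly_Mapping.single (\<mu> m) (\<chi> m * Poly_Mapping.lookup (p+q) m))"
    by (rule Phi_superset) (use keys_add[of p q] in auto)
  also have "\<dots> = (\<Sum>m\<in>?S. Poly_Mapping.single (\<mu> m) (\<chi> m * Poly_Mapping.lookup p m)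
     + Poly_Mapping.single (\<mu> m) (\<chi> m * Poly_Mapping.lookup q m))"
    by (simp add: lookup_add distrib_left single_add)
  also have "\<dots> = Phi \<mu> \<chi> p + Phi \<mu> \<chi> q"
    by (simp add: sum.distrib Phi_superset[of ?S])
  finally show ?thesis .
qed

lemma Phi_zero[simp]: "Phi \<mu> \<chi> 0 = 0" by (simp add: Phi_def)

lemma Phi_diff: "Phi \<mu> \<chi> (p - q) = Phi \<mu> \<chi> p - Phi \<mu> \<chi> q"
  using Phi_add[of \<mu> \<chi> "p - q" q] by (simp add: eq_diff_eq)

lemma Phi_sum: "Phi \<mu> \<chi> (\<Sum>i\<in>I. F i) = (\<Sum>i\<in>I. Phi \<mu> \<chi> (F i))"
  by (induction I rule: infinite_finite_induct) (auto simp: Phi_add)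

lemma Phi_single[simp]: "Phi \<mu> \<chi> (Poly_Mapping.single m c) = Poly_Mapping.single (\<mu> m) (\<chi> m * c)"
  by (simp add: Phi_def)

lemma pm_expand: "p = (\<Sum>m\<in>Poly_Mapping.keys p. Poly_Mapping.single m (Poly_Mapping.lookup p m))"
proof (rule poly_mapping_eqI)
  fix k
  show "Poly_Mapping.lookup p k = Poly_Mapping.lookup (\<Sum>m\<in>Poly_Mapping.keys p. Poly_Mapping.single m (Poly_Mapping.lookup p m)) k"
    by (cases "k \<in> Poly_Mapping.keys p")
       (auto simp: lookup_sum lookup_single when_def in_keys_iff)
qed

lemma Phi_mult:
  assumes mu: "\<And>a b. \<mu> (a + b) = \<mu> a + \<mu> b" and chi: "\<And>a b. \<chi> (a + b) = \<chi> a * \<chi> b"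
  shows "Phi \<mu> \<chi> (p * q) = Phi \<mu> \<chi> p * Phi \<mu> \<chi> q"
proof -
  let ?P = "Poly_Mapping.keys p" and ?Q = "Poly_Mapping.keys q"
  have "p * q = (\<Sum>a\<in>?P. Poly_Mapping.single a (Poly_Mapping.lookup p a)) * (\<Sum>b\<in>?Q. Poly_Mapping.single b (Poly_Mapping.lookup q b))"
    using pm_expand[of p] pm_expand[of q] by simp
  also have "\<dots> = (\<Sum>a\<in>?P. \<Sum>b\<in>?Q. Poly_Mapping.single (a + b) (Poly_Mapping.lookup p a * Poly_Mapping.lookup q b))"
    by (simp add: sum_product mult_single)
  finally have "Phi \<mu> \<chi> (p * q) = (\<Sum>a\<in>?P. \<Sum>b\<in>?Q. Poly_Mapping.single (\<mu> a + \<mu> b) (\<chi> a * \<chi> b * (Poly_Mapping.lookup p a * Poly_Mapping.lookup q b)))"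
    by (simp add: Phi_sum mu chi)
  also have "\<dots> = (\<Sum>a\<in>?P. Poly_Mapping.single (\<mu> a) (\<chi> a * Poly_Mapping.lookup p a)) * (\<Sum>b\<in>?Q. Poly_Mapping.single (\<mu> b) (\<chi> b * Poly_Mapping.lookup q b))"
    by (simp add: sum_product mult_single algebra_simps)
  finally show ?thesis by (simp add: Phi_def)
qed

definition mv :: "nat \<Rightarrow> nat \<Rightarrow> (nat \<Rightarrow>\<^sub>0 nat) \<Rightarrow> (nat \<Rightarrow>\<^sub>0 nat)" where
  "mv a b m = Poly_Mapping.update a 0 m + Poly_Mapping.single b (Poly_Mapping.lookup m a)"

lemma lookup_mv: "a \<noteq> b \<Longrightarrow> Poly_Mapping.lookup (mv a b m) x =
   (if x = a then 0 else if x = b then Poly_Mapping.lookup m b + Poly_Mapping.lookup m a else Poly_Mapping.lookup m x)"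
  by (auto simp: mv_def lookup_add lookup_update lookup_single when_def)

lemma mv_add: "a \<noteq> b \<Longrightarrow> mv a b (m1 + m2) = mv a b m1 + mv a b m2"
  by (rule poly_mapping_eqI) (simp add: lookup_mv lookup_add)

lemma mv_single: "a \<noteq> b \<Longrightarrow> mv a b (Poly_Mapping.single c 1) = Poly_Mapping.single (if c = a then b else c) 1"
  by (rule poly_mapping_eqI) (auto simp: lookup_mv lookup_single when_def)

lemma Phi_mv_pvar: "a \<noteq> b \<Longrightarrow> Phi (mv a b) (\<lambda>_. 1) (pvar c) = pvar (if c = a then b else c)"
  unfolding pvar_def Phi_single by (subst mv_single) simp_all

lemma pvar_pow: "Poly_Mapping.single (Poly_Mapping.single a k) (1::complex) = pvar a ^ k"
proof (induction k)
  case 0 then show ?case by simp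
next
  case (Suc k)
  have "Poly_Mapping.single (Poly_Mapping.single a (Suc k)) (1::complex)
       = Poly_Mapping.single (Poly_Mapping.single a 1 + Poly_Mapping.single a k) (1 * 1)"
    by (simp add: single_add[symmetric])
  also have "\<dots> = Poly_Mapping.single (Poly_Mapping.single a 1) 1 * Poly_Mapping.single (Poly_Mapping.single a k) (1::complex)"
    by (simp only: mult_single)
  also have "\<dots> = pvar a * pvar a ^ k" unfolding Suc.IH pvar_def ..
  finally show ?case by simp
qed

lemma pvar_inj: "pvar a = pvar b \<Longrightarrow> a = b"
  unfolding pvar_def by (metis inj_single injD lookup_single_eq lookup_single_not_eq one_neq_zero)

lemma mono_split: "m = Poly_Mapping.update a 0 m + Poly_Mapping.single a (Poly_Mapping.lookup m a)"
  by (rule poly_mapping_eqI) (auto simp: lookup_add lookup_update lookup_single when_def)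

lemma term_dvd:
  assumes "a \<noteq> b"
  shows "(pvar a - pvar b) dvd (Poly_Mapping.single m c - Poly_Mapping.single (mv a b m) (c::complex))"
proof -
  let ?m' = "Poly_Mapping.update a 0 m" and ?k = "Poly_Mapping.lookup m a"
  have e1: "Poly_Mapping.single m c = Poly_Mapping.single 0 c * Poly_Mapping.single ?m' 1 * pvar a ^ ?k"
    by (subst mono_split[of m a]) (simp add: mult_single pvar_pow[symmetric])
  have e2: "Poly_Mapping.single (mv a b m) c = Poly_Mapping.single 0 c * Poly_Mapping.single ?m' 1 * pvar b ^ ?k"
    by (simp add: mv_def mult_single pvar_pow[symmetric])
  have "(pvar a - pvar b) dvd (pvar a ^ ?k - pvar b ^ ?k)"
    by (simp add: power_diff_sumr2)
  then show ?thesis unfolding e1 e2 by (simp add: right_diff_distrib[symmetric] mult.assoc)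
qed

lemma Phi_mv_dvd:
  assumes "a \<noteq> b" "Phi (mv a b) (\<lambda>_. 1) p = 0"
  shows "(pvar a - pvar b) dvd p"
proof -
  have "p = p - Phi (mv a b) (\<lambda>_. 1) p" using assms by simp
  also have "\<dots> = (\<Sum>m\<in>Poly_Mapping.keys p. Poly_Mapping.single m (Poly_Mapping.lookup p m)
        - Poly_Mapping.single (mv a b m) (Poly_Mapping.lookup p m))"
    by (subst (1) pm_expand[of p]) (simp add: Phi_def sum_subtractf)
  finally have "p = \<dots>" .
  moreover have "(pvar a - pvar b) dvd \<dots>"
    by (rule dvd_sum) (rule term_dvd[OF assms(1)])
  ultimately show ?thesis by simp
qed

definition chiX :: "nat set \<Rightarrow> (nat \<Rightarrow>\<^sub>0 nat) \<Rightarrow> complex" where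
  "chiX X m = (if Poly_Mapping.keys m \<subseteq> X then 1 else 0)"

lemma keys_add_nat: "Poly_Mapping.keys (m1 + m2) = Poly_Mapping.keys m1 \<union> Poly_Mapping.keys (m2 :: nat \<Rightarrow>\<^sub>0 nat)"
  by (auto simp: in_keys_iff lookup_add)

lemma chiX_add: "chiX X (a + b) = chiX X a * chiX X b"
  by (simp add: chiX_def keys_add_nat)

lemma Phi_chiX_id: "pvars p \<subseteq> X \<Longrightarrow> Phi (\<lambda>m. m) (chiX X) p = p"
  unfolding Phi_def
  by (subst (2) pm_expand[of p], rule sum.cong) (auto simp: chiX_def pvars_def)

lemma Phi_chiX_pvars: "pvars (Phi (\<lambda>m. m) (chiX X) p) \<subseteq> X"
proof -
  have "Poly_Mapping.keys (Phi (\<lambda>m. m) (chiX X) p) \<subseteq> (\<Union>m\<in>Poly_Mapping.keys p. Poly_Mapping.keys (Poly_Mapping.single m (chiX X m * Poly_Mapping.lookup p m)))"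
    unfolding Phi_def by (rule keys_sum)
  also have "\<dots> \<subseteq> {m. Poly_Mapping.keys m \<subseteq> X}" by (auto simp: chiX_def)
  finally show ?thesis unfolding pvars_def by blast
qed

lemma key:
  assumes ab: "a \<noteq> b" and cd: "c \<noteq> d" and ne1: "\<not> (c = a \<and> d = b)" and ne2: "\<not> (c = b \<and> d = a)"
    and eq: "(pvar c - pvar d) * p = (pvar a - pvar b) * q"
    and X: "pvars p \<subseteq> X" "a \<in> X" "b \<in> X"
  shows "\<exists>h. p = (pvar a - pvar b) * h \<and> pvars h \<subseteq> X"
proof -
  let ?F = "Phi (mv a b) (\<lambda>_. 1)"
  have hom: "?F (x * y) = ?F x * ?F y" for x y
    by (rule Phi_mult) (simp_all add: mv_add[OF ab])
  from arg_cong[OF eq, of ?F]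
  have "(pvar (if c = a then b else c) - pvar (if d = a then b else d)) * ?F p = 0"
    by (simp add: hom Phi_diff Phi_mv_pvar[OF ab])
  moreover have "pvar (if c = a then b else c) \<noteq> pvar (if d = a then b else d)"
    using ab cd ne1 ne2 pvar_inj by auto
  ultimately have "?F p = 0" by simp
  from Phi_mv_dvd[OF ab this] obtain h0 where h0: "p = (pvar a - pvar b) * h0" by (elim dvdE)
  let ?G = "Phi (\<lambda>m. m) (chiX X)"
  have homG: "?G (x * y) = ?G x * ?G y" for x y
    by (rule Phi_mult) (simp_all add: chiX_add)
  have "pvars (pvar a - pvar b) \<subseteq> X"
    using X by (auto simp: pvars_def pvar_def dest!: keys_diff[THEN subsetD])
  then have "p = (pvar a - pvar b) * ?G h0"
    using Phi_chiX_id[OF X(1)] h0 homG Phi_chiX_id by metis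
  then show ?thesis using Phi_chiX_pvars by blast
qed

lemma ring_step:
  fixes fv fs ft fts L L' D A B E gv gt :: "'a::comm_ring"
  assumes "fv - fs = L * gv" "ft - fts = L' * gt" "fv - ft = D * A" "fs - fts = D * B" "L' = L + D * E"
  shows "L * (gv - gt) = D * (A - B + E * gt)"
proof -
  have "L * (gv - gt) = L * gv - L' * gt + D * E * gt" using assms(5) by (simp add: algebra_simps)
  also have "\<dots> = (fv - ft) - (fs - fts) + D * E * gt" using assms(1,2) by (simp add: algebra_simps)
  also have "\<dots> = D * (A - B + E * gt)" using assms(3,4) by (simp add: algebra_simps)
  finally show ?thesis .
qed

lemma LL_lemma:
  fixes a a' b b' D e1 e2 :: "'a::comm_ring"
  assumes "a' - a = D * e1" "b' - b = D * e2"
  shows "a' - b' = (a - b) + D * (e1 - e2)"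
proof -
  have "a' = D * e1 + a" "b' = D * e2 + b" using assms by (simp_all add: diff_eq_eq)
  then show ?thesis by (simp add: algebra_simps)
qed

lemma conj_transpose:
  "transpose a b \<circ> transpose j k \<circ> transpose a b = transpose (transpose a b j) (transpose a b k)"
  by (auto simp: fun_eq_iff transpose_def)

lemma pvars_diff: "pvars (p - q) \<subseteq> pvars p \<union> pvars q"
  unfolding pvars_def using keys_diff[of p q] by blast

lemma Sn_comp: "v \<in> Sn n \<Longrightarrow> t permutes {1..n} \<Longrightarrow> v \<circ> t \<in> Sn n"
  unfolding Sn_def by (auto intro: permutes_compose)

lemma Sn_comp_transpose: "j \<in> {1..n} \<Longrightarrow> k \<in> {1..n} \<Longrightarrow> v \<circ> transpose j k \<in> Sn n \<longleftrightarrow> v \<in> Sn n"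
proof
  assume j: "j \<in> {1..n}" and k: "k \<in> {1..n}" and "v \<circ> transpose j k \<in> Sn n"
  then have "v \<circ> transpose j k \<circ> transpose j k \<in> Sn n" using j k by (metis Sn_comp permutes_swap_id)
  moreover have "v \<circ> transpose j k \<circ> transpose j k = v" by (simp add: fun_eq_iff)
  ultimately show "v \<in> Sn n" by simp
qed (metis Sn_comp permutes_swap_id)

lemma e_lemma:
  "\<exists>e. pvar (v (transpose j k x)) - pvar (v x) = (pvar (v j) - pvar (v k)) * e"
proof -
  consider "x = j" | "x = k" | "x \<noteq> j" "x \<noteq> k" by blast
  then show ?thesis
  proof cases
    case 1 then show ?thesis by (intro exI[of _ "-1"]) simp
  next
    case 2 then show ?thesis by (intro exI[of _ "1"]) simp
  next
    case 3 then show ?thesis by (intro exI[of _ "0"]) simp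
  qed
qed

lemma Htr_E:
  assumes "f \<in> Htr n j k" "v \<in> Sn n"
  shows "\<exists>a. f v - f (v \<circ> transpose j k) = (pvar (v j) - pvar (v k)) * a"
proof -
  from assms(1) obtain g where "(\<lambda>v. f v - star f (transpose j k) v) = (\<lambda>v. (xfun n j v - xfun n k v) * g v)"
    by (auto simp: Htr_def)
  from fun_cong[OF this, of v] assms(2) show ?thesis by (auto simp: star_def xfun_def)
qed

theorem lemma2:
  fixes n i :: nat and C :: "(nat \<Rightarrow> nat) set"
  assumes "n \<ge> 1" and "1 \<le> i" and "i \<le> n - 1"
    and "C \<subseteq> transpositions n"
    and "s i \<in> C" and "(\<lambda>\<tau>. s i \<circ> \<tau> \<circ> s i) ` C = C"
  shows "HC n C \<subseteq> Htr n i (i + 1) \<and> divdiff n i ` HC n C \<subseteq> HC n C"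
proof -
  have i1: "i \<in> {1..n}" "i+1 \<in> {1..n}" using assms by auto
  have sip: "s i permutes {1..n}" unfolding s_def using i1 by (rule permutes_swap_id)
  have part1: "HC n C \<subseteq> Htr n i (i+1)" using assms(5) by (auto simp: HC_def s_def)
  moreover have "divdiff n i f \<in> HC n C" if f: "f \<in> HC n C" for f
  proof -
    from part1 f have fi: "f \<in> Htr n i (i+1)" by auto
    then obtain g where g: "g \<in> Hring n" and gE: "(\<lambda>v. f v - star f (transpose i (i+1)) v) = (\<lambda>v. (xfun n i v - xfun n (i+1) v) * g v)"
      by (auto simp: Htr_def)
    have E1: "f v - f (v \<circ> s i) = (pvar (v i) - pvar (v (i+1))) * g v" if "v \<in> Sn n" for v
      using fun_cong[OF gE, of v] that by (simp add: star_def xfun_def s_def)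
    have Lne: "pvar (v i) - pvar (v (i+1)) \<noteq> 0" if "v \<in> Sn n" for v
    proof
      assume "pvar (v i) - pvar (v (i+1)) = 0"
      then have "v i = v (i+1)" using pvar_inj by simp
      moreover have "inj v" using that by (auto simp: Sn_def intro: permutes_inj)
      ultimately show False by (auto dest: injD)
    qed
    have dd: "divdiff n i f = g"
    proof
      fix v show "divdiff n i f v = g v"
      proof (cases "v \<in> Sn n")
        case True
        have "(f v - star f (s i) v = (xfun n i v - xfun n (i + 1) v) * q) \<longleftrightarrow> q = g v" for q
          using E1[OF True] Lne[OF True] True by (auto simp: star_def xfun_def s_def)
        then show ?thesis using True by (simp add: divdiff_def)
      next
        case False then show ?thesis using g by (simp add: divdiff_def Hring_def)
      qed
    qed
    have gvars: "pvars (g v) \<subseteq> {1..n}" if "v \<in> Sn n" for v using g that by (auto simp: Hring_def)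
    have fH: "\<forall>\<tau>\<in>C. \<forall>j k. j \<noteq> k \<and> \<tau> = transpose j k \<longrightarrow> f \<in> Htr n j k" using f by (simp add: HC_def)
    have "g \<in> Htr n j k" if tC: "\<tau> \<in> C" and jk: "j \<noteq> k" and tau: "\<tau> = transpose j k" for \<tau> j k
    proof -
      from tC assms(4) obtain j' k' where "\<tau> = transpose j' k'" "j' \<in> {1..n}" "k' \<in> {1..n}"
        by (auto simp: transpositions_def)
      then have tp: "\<tau> permutes {1..n}" by (simp add: permutes_swap_id)
      have j1: "j \<in> {1..n}" using permutes_not_in[OF tp, of j] tau jk by auto
      have k1: "k \<in> {1..n}" using permutes_not_in[OF tp, of k] tau jk by auto
      have P: "\<exists>h. g v - g (v \<circ> \<tau>) = (pvar (v j) - pvar (v k)) * h \<and> pvars h \<subseteq> {1..n}" if v: "v \<in> Sn n" for v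
      proof (cases "\<tau> = s i")
        case True
        have vs: "v \<circ> s i \<in> Sn n" using v sip by (rule Sn_comp)
        have "v \<circ> s i \<circ> s i = v" by (simp add: fun_eq_iff s_def)
        with E1[OF vs] have "f (v \<circ> s i) - f v = (pvar (v (i+1)) - pvar (v i)) * g (v \<circ> s i)"
          by (simp add: s_def)
        with E1[OF v] have "(pvar (v i) - pvar (v (i+1))) * g (v \<circ> s i) = (pvar (v i) - pvar (v (i+1))) * g v"
          by (metis minus_diff_eq mult_minus_left)
        with Lne[OF v] have "g (v \<circ> s i) = g v" by simp
        then show ?thesis using True by (intro exI[of _ 0]) (simp add: pvars_def)
      next
        case False
        let ?si = "s i"
        have sC: "?si \<circ> \<tau> \<circ> ?si \<in> C" using assms(6) tC by blast
        have sig: "?si \<circ> \<tau> \<circ> ?si = transpose (?si j) (?si k)" unfolding tau s_def by (rule conj_transpose)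
        have sjk: "?si j \<noteq> ?si k" using jk by (metis s_def transpose_involutory)
        have fs: "f \<in> Htr n (?si j) (?si k)" using fH sC sig sjk by metis
        have vs: "v \<circ> s i \<in> Sn n" using v sip by (rule Sn_comp)
        have vt: "v \<circ> \<tau> \<in> Sn n" using v tp by (rule Sn_comp)
        obtain B where E3: "f (v \<circ> ?si) - f (v \<circ> ?si \<circ> transpose (?si j) (?si k)) = (pvar ((v \<circ> ?si) (?si j)) - pvar ((v \<circ> ?si) (?si k))) * B"
          using Htr_E[OF fs vs] by blast
        have c1: "v \<circ> ?si \<circ> transpose (?si j) (?si k) = v \<circ> \<tau> \<circ> ?si"
          unfolding sig[symmetric] by (simp add: fun_eq_iff s_def)
        have c2: "(v \<circ> ?si) (?si j) = v j" "(v \<circ> ?si) (?si k) = v k" by (simp_all add: s_def)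
        from E3 c1 c2 have E3': "f (v \<circ> ?si) - f (v \<circ> \<tau> \<circ> ?si) = (pvar (v j) - pvar (v k)) * B" by simp
        obtain A where E2: "f v - f (v \<circ> \<tau>) = (pvar (v j) - pvar (v k)) * A"
          using Htr_E[OF fH[rule_format, OF tC, of j k] v] jk tau by blast
        have E1': "f (v \<circ> \<tau>) - f (v \<circ> \<tau> \<circ> ?si) = (pvar (v (\<tau> i)) - pvar (v (\<tau> (i+1)))) * g (v \<circ> \<tau>)"
          using E1[OF vt] by simp
        obtain e1 where e1: "pvar (v (\<tau> i)) - pvar (v i) = (pvar (v j) - pvar (v k)) * e1"
          using e_lemma[of v j k i] tau by blast
        obtain e2 where e2: "pvar (v (\<tau> (i+1))) - pvar (v (i+1)) = (pvar (v j) - pvar (v k)) * e2"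
          using e_lemma[of v j k "i+1"] tau by blast
        have LL: "pvar (v (\<tau> i)) - pvar (v (\<tau> (i+1))) = (pvar (v i) - pvar (v (i+1))) + (pvar (v j) - pvar (v k)) * (e1 - e2)"
          using e1 e2 by (rule LL_lemma)
        have main: "(pvar (v i) - pvar (v (i+1))) * (g v - g (v \<circ> \<tau>)) = (pvar (v j) - pvar (v k)) * (A - B + (e1 - e2) * g (v \<circ> \<tau>))"
          by (rule ring_step[OF E1[OF v] E1' E2 E3' LL])
        have inj: "inj v" using v by (auto simp: Sn_def intro: permutes_inj)
        have vp: "v permutes {1..n}" using v by (simp add: Sn_def)
        show ?thesis
        proof (rule key[OF _ _ _ _ main])
          have vi: "\<And>x y. v x = v y \<Longrightarrow> x = y" using inj by (simp add: inj_eq)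
          show "v j \<noteq> v k" using vi jk by blast
          show "v i \<noteq> v (i+1)" using vi by force
          show "\<not> (v i = v j \<and> v (i + 1) = v k)"
          proof
            assume "v i = v j \<and> v (i + 1) = v k"
            then have "i = j" "i + 1 = k" using vi by blast+
            then show False using False tau by (simp add: s_def)
          qed
          show "\<not> (v i = v k \<and> v (i + 1) = v j)"
          proof
            assume "v i = v k \<and> v (i + 1) = v j"
            then have "i = k" "i + 1 = j" using vi by blast+
            then show False using False tau by (simp add: s_def transpose_commute)
          qed
          show "pvars (g v - g (v \<circ> \<tau>)) \<subseteq> {1..n}" using pvars_diff gvars[OF v] gvars[OF vt] by blast
          show "v j \<in> {1..n}" "v k \<in> {1..n}" using j1 k1 permutes_in_image[OF vp] by auto
        qed
      qed
      define h where "h v = (if v \<in> Sn n then (SOME h. g v - g (v \<circ> \<tau>) = (pvar (v j) - pvar (v k)) * h \<and> pvars h \<subseteq> {1..n}) else 0)" for v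
      have hP: "g v - g (v \<circ> \<tau>) = (pvar (v j) - pvar (v k)) * h v \<and> pvars (h v) \<subseteq> {1..n}" if "v \<in> Sn n" for v
        using someI_ex[OF P[OF that]] that by (simp add: h_def)
      have hH: "h \<in> Hring n" unfolding Hring_def
      proof (intro CollectI conjI ballI allI impI)
        fix v assume "v \<in> Sn n" then show "pvars (h v) \<subseteq> {1..n}" using hP by blast
      next
        fix v assume "v \<notin> Sn n" then show "h v = 0" by (simp add: h_def)
      qed
      have "(\<lambda>v. g v - star g (transpose j k) v) = (\<lambda>v. (xfun n j v - xfun n k v) * h v)"
      proof
        fix v show "g v - star g (transpose j k) v = (xfun n j v - xfun n k v) * h v"
        proof (cases "v \<in> Sn n")
          case True then show ?thesis using hP[OF True] tau by (simp add: star_def xfun_def)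
        next
          case False
          then have "v \<circ> transpose j k \<notin> Sn n" using Sn_comp_transpose[OF j1 k1] by simp
          then show ?thesis using False g by (simp add: star_def xfun_def Hring_def)
        qed
      qed
      then show ?thesis using g hH by (auto simp: Htr_def)
    qed
    then show ?thesis using g dd by (auto simp: HC_def)
  qed
  ultimately show ?thesis by blast
qed

end
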